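(* Let $g$ be a probability density on $\mathbb{R}$ which is unimodal, symmetric about $0$, and logconcave, with survivor function $\bar G = 1-G$. Then for all $z\ge 0$: (a) $\displaystyle \frac{g(z)}{g(2z)} \ge \frac{1}{2\bar G(z)}-1$; (b) $\displaystyle \frac{\bar G(z)}{\bar G(2z)} \ge \frac{1}{2\bar G(z)}-1$.
   Context: A density $g$ on $\mathbb{R}$ is logconcave if $\log g$ is concave on the support of $g$. Unimodal and symmetric about $0$ means $g(z)=g(-z)$ and $g$ is nonincreasing on $[0,\infty)$. $G$ is the cdf of $g$. Ratios are considered where denominators are positive. *)

theory Defs
  imports "HOL-Analysis.Analysis"
begin

definition prob_density :: "(real \<Rightarrow> real) \<Rightarrow> bool" where
  "prob_density g \<longleftrightarrow> g \<in> borel_measurable lborel \<and> (\<forall>x. 0 \<le> g x) \<and>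
     integrable lborel g \<and> (\<integral>x. g x \<partial>lborel) = 1"

text \<open>Logconcave: log g is concave on the support of g (which in particular is convex).\<close>
definition logconcave :: "(real \<Rightarrow> real) \<Rightarrow> bool" where
  "logconcave g \<longleftrightarrow> concave_on {x. 0 < g x} (\<lambda>x. ln (g x))"

definition unimodal_symmetric :: "(real \<Rightarrow> real) \<Rightarrow> bool" where
  "unimodal_symmetric g \<longleftrightarrow> (\<forall>z. g (- z) = g z) \<and> (\<forall>x y. 0 \<le> x \<longrightarrow> x \<le> y \<longrightarrow> g y \<le> g x)"

definition cdf_of :: "(real \<Rightarrow> real) \<Rightarrow> real \<Rightarrow> real" where
  "cdf_of g z = (LINT x:{..z}|lborel. g x)"

definition survivor :: "(real \<Rightarrow> real) \<Rightarrow> real \<Rightarrow> real" where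
  "survivor g z = 1 - cdf_of g z"

end

theory Submission
  imports Defs
begin

lemma pw:
  fixes g :: "real \<Rightarrow> real"
  assumes lc: "logconcave g" and nn: "\<And>x. 0 \<le> g x"
    and ab: "a \<le> b" and ac: "a \<le> c" and bd: "b \<le> d" and cd: "c \<le> d" and s: "a + d = b + c"
  shows "g a * g d \<le> g b * g c"
proof (cases "g a > 0 \<and> g d > 0 \<and> a < d")
  case False
  then consider "g a = 0" | "g d = 0" | "a = d" using nn[of a] nn[of d] ab bd by force
  then show ?thesis
  proof cases
    case 3 then have "b = a" "c = a" using ab bd ac cd by auto
    then show ?thesis using 3 by simp
  qed (use nn in \<open>auto intro: mult_nonneg_nonneg\<close>)
next
  case True
  define S where "S = {x. 0 < g x}"
  have cS: "concave_on S (\<lambda>x. ln (g x))" using lc by (simp add: logconcave_def S_def)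
  have aS: "a \<in> S" and dS: "d \<in> S" using True by (auto simp: S_def)
  define t where "t = (b - a) / (d - a)"
  have t0: "0 \<le> t" and t1: "t \<le> 1" using True ab bd by (auto simp: t_def field_simps)
  have td: "t * (d - a) = b - a" using True by (simp add: t_def)
  have beq: "b = (1 - t) *\<^sub>R a + t *\<^sub>R d" using td by (simp add: algebra_simps)
  have ceq: "c = (1 - (1 - t)) *\<^sub>R a + (1 - t) *\<^sub>R d" using td s by (simp add: algebra_simps)
  have hb: "ln (g b) \<ge> (1 - t) * ln (g a) + t * ln (g d)"
    using concave_onD[OF cS t0 t1 aS dS] beq by simp
  have hc: "ln (g c) \<ge> (1 - (1 - t)) * ln (g a) + (1 - t) * ln (g d)"
    using concave_onD[OF cS _ _ aS dS, of "1 - t"] ceq t0 t1 by simp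
  have cvx: "convex S" using cS by (simp add: concave_on_iff)
  have "b \<in> S" using convexD[OF cvx aS dS, of "1 - t" t] beq t0 t1 by simp
  moreover have "c \<in> S" using convexD[OF cvx aS dS, of "1 - (1 - t)" "1 - t"] ceq t0 t1 by simp
  ultimately have gb: "g b > 0" and gc: "g c > 0" by (auto simp: S_def)
  have "ln (g a * g d) \<le> ln (g b * g c)"
    using hb hc True gb gc by (simp add: ln_mult algebra_simps)
  then show ?thesis using True gb gc by simp
qed

lemma transl:
  fixes f :: "real \<Rightarrow> real"
  assumes "integrable lborel f"
  shows "integrable lborel (\<lambda>t. f (c + t)) \<and> integral\<^sup>L lborel (\<lambda>t. f (c + t)) = integral\<^sup>L lborel f"
  using lborel_integral_real_affine[of 1 f c] lborel_integrable_real_affine[OF assms, of 1 c] by simp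

lemma indint:
  fixes g :: "real \<Rightarrow> real"
  assumes "prob_density g" and "A \<in> sets borel"
  shows "integrable lborel (\<lambda>x. indicator A x * g x)"
proof -
  have "integrable lborel g" using assms by (simp add: prob_density_def)
  then show ?thesis using integrable_mult_indicator[of "A" lborel g] assms(2) by simp
qed

lemma surv:
  fixes g :: "real \<Rightarrow> real"
  assumes pd: "prob_density g"
  shows "survivor g z = integral\<^sup>L lborel (\<lambda>x. indicator {z<..} x * g x)"
proof -
  have ig: "integrable lborel g" and one: "integral\<^sup>L lborel g = 1" using pd by (auto simp: prob_density_def)
  have "survivor g z = integral\<^sup>L lborel g - integral\<^sup>L lborel (\<lambda>x. indicator {..z} x * g x)"
    by (simp add: survivor_def cdf_of_def set_lebesgue_integral_def one)
  also have "\<dots> = integral\<^sup>L lborel (\<lambda>x. g x - indicator {..z} x * g x)"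
    using ig indint[OF pd, of "{..z}"] by (simp add: Bochner_Integration.integral_diff)
  also have "\<dots> = integral\<^sup>L lborel (\<lambda>x. indicator {z<..} x * g x)"
    by (rule Bochner_Integration.integral_cong) (auto split: split_indicator)
  finally show ?thesis .
qed

lemma shifted:
  fixes g :: "real \<Rightarrow> real"
  assumes pd: "prob_density g" and "a \<le> b"
  shows "integrable lborel (\<lambda>t. indicator {0<..b - a} t * g (a + t)) \<and>
    integral\<^sup>L lborel (\<lambda>t. indicator {0<..b - a} t * g (a + t)) = integral\<^sup>L lborel (\<lambda>x. indicator {a<..b} x * g x)"
proof -
  have e: "(\<lambda>t. indicator {a<..b} (a + t) * g (a + t)) = (\<lambda>t. indicator {0<..b - a} t * g (a + t))"
    by (auto simp: fun_eq_iff indicator_def)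
  have "integrable lborel (\<lambda>x. indicator {a<..b} x * g x)" by (rule indint[OF pd]) simp
  from transl[OF this, of a] show ?thesis unfolding e .
qed

lemma shifted_inf:
  fixes g :: "real \<Rightarrow> real"
  assumes pd: "prob_density g"
  shows "integrable lborel (\<lambda>t. indicator {0<..} t * g (a + t)) \<and>
    integral\<^sup>L lborel (\<lambda>t. indicator {0<..} t * g (a + t)) = survivor g a"
proof -
  have e: "(\<lambda>t. indicator {a<..} (a + t) * g (a + t)) = (\<lambda>t. indicator {0<..} t * g (a + t))"
    by (auto simp: fun_eq_iff indicator_def)
  have "integrable lborel (\<lambda>x. indicator {a<..} x * g x)" by (rule indint[OF pd]) simp
  from transl[OF this, of a] show ?thesis unfolding e surv[OF pd] .
qed

lemma half:
  fixes g :: "real \<Rightarrow> real"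
  assumes pd: "prob_density g" and us: "unimodal_symmetric g"
  shows "survivor g 0 = 1/2"
proof -
  have ig: "integrable lborel g" and one: "integral\<^sup>L lborel g = 1" using pd by (auto simp: prob_density_def)
  have sym: "\<And>x. g (- x) = g x" using us by (simp add: unimodal_symmetric_def)
  have r: "integral\<^sup>L lborel (\<lambda>x. indicator {..0} x * g x) = integral\<^sup>L lborel (\<lambda>x. indicator {0..} x * g x)"
    using lborel_integral_real_affine[of "-1" "\<lambda>x. indicator {..0} x * g x" 0]
    by (simp add: sym indicator_def)
  have z: "integral\<^sup>L lborel (\<lambda>x. indicator {0} x * g x) = 0"
  proof -
    have "integral\<^sup>L lborel (\<lambda>x. indicator {0} x * g x) = integral\<^sup>L lborel (\<lambda>x. g 0 * indicator {0::real} x)"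
      by (rule Bochner_Integration.integral_cong) (auto split: split_indicator)
    then show ?thesis by simp
  qed
  have "integral\<^sup>L lborel (\<lambda>x. indicator {..0} x * g x) + integral\<^sup>L lborel (\<lambda>x. indicator {0..} x * g x)
      = integral\<^sup>L lborel (\<lambda>x. g x + indicator {0} x * g x)"
  proof -
    have i1: "integrable lborel (\<lambda>x. indicator {..0} x * g x)" by (rule indint[OF pd]) simp
    have i2: "integrable lborel (\<lambda>x. indicator {0..} x * g x)" by (rule indint[OF pd]) simp
    have i3: "integrable lborel (\<lambda>x. indicator {0} x * g x)" by (rule indint[OF pd]) simp
    have "integral\<^sup>L lborel (\<lambda>x. indicator {..0} x * g x) + integral\<^sup>L lborel (\<lambda>x. indicator {0..} x * g x)
      = integral\<^sup>L lborel (\<lambda>x. indicator {..0} x * g x + indicator {0..} x * g x)"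
      using i1 i2 by (rule Bochner_Integration.integral_add[symmetric])
    also have "\<dots> = integral\<^sup>L lborel (\<lambda>x. g x + indicator {0} x * g x)"
      by (rule Bochner_Integration.integral_cong) (auto split: split_indicator)
    finally show ?thesis .
  qed
  also have "\<dots> = 1" using ig indint[OF pd, of "{0}"] one z by (simp add: Bochner_Integration.integral_add)
  finally show ?thesis using r by (simp add: survivor_def cdf_of_def set_lebesgue_integral_def)
qed


lemma split_surv:
  fixes g :: "real \<Rightarrow> real"
  assumes pd: "prob_density g" and us: "unimodal_symmetric g" and z: "0 \<le> z"
  shows "1 - 2 * survivor g z = 2 * integral\<^sup>L lborel (\<lambda>x. indicator {0<..z} x * g x)"
proof -
  have i1: "integrable lborel (\<lambda>x. indicator {0<..z} x * g x)" by (rule indint[OF pd]) simp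
  have i2: "integrable lborel (\<lambda>x. indicator {z<..} x * g x)" by (rule indint[OF pd]) simp
  have "survivor g 0 = integral\<^sup>L lborel (\<lambda>x. indicator {0<..z} x * g x + indicator {z<..} x * g x)"
    unfolding surv[OF pd] using z
    by (intro Bochner_Integration.integral_cong) (auto split: split_indicator)
  also have "\<dots> = integral\<^sup>L lborel (\<lambda>x. indicator {0<..z} x * g x) + survivor g z"
    using i1 i2 by (simp add: surv[OF pd])
  finally show ?thesis using half[OF pd us] by simp
qed

theorem lemma2:
  fixes g :: "real \<Rightarrow> real"
  assumes "prob_density g"
    and "unimodal_symmetric g"
    and "logconcave g"
  shows "(\<forall>z\<ge>0. 0 < g (2 * z) \<and> 0 < survivor g z \<longrightarrow>
            g z / g (2 * z) \<ge> 1 / (2 * survivor g z) - 1) \<and>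
         (\<forall>z\<ge>0. 0 < survivor g (2 * z) \<and> 0 < survivor g z \<longrightarrow>
            survivor g z / survivor g (2 * z) \<ge> 1 / (2 * survivor g z) - 1)"
proof -
  note pd = assms(1) and us = assms(2) and lc = assms(3)
  have nn: "\<And>x. 0 \<le> g x" using pd by (simp add: prob_density_def)
  define I where "I z = integral\<^sup>L lborel (\<lambda>x. indicator {0<..z} x * g x)" for z
  have key: "1 / (2 * survivor g z) - 1 = I z / survivor g z" if "0 \<le> z" "0 < survivor g z" for z
  proof -
    have "1 - 2 * survivor g z = 2 * I z" using split_surv[OF pd us that(1)] by (simp add: I_def)
    have "1 / (2 * survivor g z) - 1 = (1 - 2 * survivor g z) / (2 * survivor g z)"
      using that(2) by (simp add: field_simps)
    also have "\<dots> = I z / survivor g z" using \<open>1 - 2 * survivor g z = 2 * I z\<close> by simp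
    finally show ?thesis .
  qed
  have mid: "integral\<^sup>L lborel (\<lambda>x. indicator {z<..2*z} x * g x) \<le> survivor g z" if "0 \<le> z" for z
    unfolding surv[OF pd]
    by (rule integral_mono) (auto intro!: indint[OF pd] simp: nn split: split_indicator)
  have sh: "integrable lborel (\<lambda>t. indicator {0<..z} t * g (z + t)) \<and>
     integral\<^sup>L lborel (\<lambda>t. indicator {0<..z} t * g (z + t)) = integral\<^sup>L lborel (\<lambda>x. indicator {z<..2*z} x * g x)"
    if "0 \<le> z" for z
    using shifted[OF pd, of z "2*z"] that by simp
  have iI: "integrable lborel (\<lambda>x. indicator {0<..z} x * g x)" for z by (rule indint[OF pd]) simp
  show ?thesis
  proof (intro conjI allI impI)
    fix z :: real assume z: "0 \<le> z" and h: "0 < g (2 * z) \<and> 0 < survivor g z"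
    have "g (2*z) * I z = integral\<^sup>L lborel (\<lambda>y. indicator {0<..z} y * (g (2*z) * g y))"
      unfolding I_def by (subst integral_mult_right_zero[symmetric]) (simp add: ac_simps)
    also have "\<dots> \<le> integral\<^sup>L lborel (\<lambda>y. indicator {0<..z} y * (g z * g (z + y)))"
    proof (rule integral_mono)
      show "integrable lborel (\<lambda>y. indicator {0<..z} y * (g (2*z) * g y))"
        using integrable_mult_right[OF iI[of z], of "g (2*z)"] by (simp add: ac_simps)
      show "integrable lborel (\<lambda>y. indicator {0<..z} y * (g z * g (z + y)))"
        using integrable_mult_right[OF conjunct1[OF sh[OF z]], of "g z"] by (simp add: ac_simps)
      fix y
      show "indicator {0<..z} y * (g (2*z) * g y) \<le> indicator {0<..z} y * (g z * g (z + y))"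
      proof (cases "y \<in> {0<..z}")
        case True
        have "g y * g (2*z) \<le> g z * g (z + y)"
          by (rule pw[OF lc nn]) (use True z in auto)
        then show ?thesis using True by (simp add: mult.commute)
      qed simp
    qed
    also have "\<dots> = g z * integral\<^sup>L lborel (\<lambda>x. indicator {z<..2*z} x * g x)"
      using sh[OF z] by (simp add: mult.left_commute)
    also have "\<dots> \<le> g z * survivor g z"
      using mid[OF z] nn[of z] by (rule mult_left_mono)
    finally have "g (2*z) * I z \<le> g z * survivor g z" .
    then have "I z / survivor g z \<le> g z / g (2*z)"
      using h by (simp add: divide_simps mult.commute)
    then show "g z / g (2 * z) \<ge> 1 / (2 * survivor g z) - 1" using key[OF z] h by simp
  next
    fix z :: real assume z: "0 \<le> z" and h: "0 < survivor g (2 * z) \<and> 0 < survivor g z"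
    have inner: "g s * survivor g (2*z) \<le> g (z + s) * survivor g z" if s: "s \<in> {0<..z}" for s
    proof -
      have "g s * survivor g (2*z) = integral\<^sup>L lborel (\<lambda>t. indicator {0<..} t * (g s * g (2*z + t)))"
        using shifted_inf[OF pd, of "2*z"] by (simp add: mult.left_commute)
      also have "\<dots> \<le> integral\<^sup>L lborel (\<lambda>t. indicator {0<..} t * (g (z + s) * g (z + t)))"
      proof (rule integral_mono)
        show "integrable lborel (\<lambda>t. indicator {0<..} t * (g s * g (2*z + t)))"
          using integrable_mult_right[OF conjunct1[OF shifted_inf[OF pd, of "2*z"]], of "g s"] by (simp add: ac_simps)
        show "integrable lborel (\<lambda>t. indicator {0<..} t * (g (z + s) * g (z + t)))"
          using integrable_mult_right[OF conjunct1[OF shifted_inf[OF pd, of "z"]], of "g (z+s)"] by (simp add: ac_simps)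
        fix t
        show "indicator {0<..} t * (g s * g (2*z + t)) \<le> indicator {0<..} t * (g (z + s) * g (z + t))"
        proof (cases "0 < t")
          case True
          have "g s * g (2*z + t) \<le> g (z + s) * g (z + t)"
            by (rule pw[OF lc nn]) (use True z s in auto)
          then show ?thesis using True by simp
        qed simp
      qed
      also have "\<dots> = integral\<^sup>L lborel (\<lambda>t. g (z + s) * (indicator {0<..} t * g (z + t)))"
        by (simp add: ac_simps)
      also have "\<dots> = g (z + s) * survivor g z"
        using shifted_inf[OF pd, of "z"] by (simp only: integral_mult_right_zero)
      finally show ?thesis .
    qed
    have "survivor g (2*z) * I z = integral\<^sup>L lborel (\<lambda>s. indicator {0<..z} s * (g s * survivor g (2*z)))"
      unfolding I_def by (subst integral_mult_right_zero[symmetric]) (simp add: ac_simps)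
    also have "\<dots> \<le> integral\<^sup>L lborel (\<lambda>s. indicator {0<..z} s * (g (z + s) * survivor g z))"
    proof (rule integral_mono)
      show "integrable lborel (\<lambda>s. indicator {0<..z} s * (g s * survivor g (2*z)))"
        using integrable_mult_left[OF iI[of z], of "survivor g (2*z)"] by (simp add: ac_simps)
      show "integrable lborel (\<lambda>s. indicator {0<..z} s * (g (z + s) * survivor g z))"
        using integrable_mult_left[OF conjunct1[OF sh[OF z]], of "survivor g z"] by (simp add: ac_simps)
      fix s
      show "indicator {0<..z} s * (g s * survivor g (2*z)) \<le> indicator {0<..z} s * (g (z + s) * survivor g z)"
        using inner[of s] by (cases "s \<in> {0<..z}") auto
    qed
    also have "\<dots> = integral\<^sup>L lborel (\<lambda>s. survivor g z * (indicator {0<..z} s * g (z + s)))"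
      by (simp add: ac_simps)
    also have "\<dots> = survivor g z * integral\<^sup>L lborel (\<lambda>x. indicator {z<..2*z} x * g x)"
      using sh[OF z] by (simp only: integral_mult_right_zero)
    also have "\<dots> \<le> survivor g z * survivor g z"
      using mid[OF z] h by (intro mult_left_mono) auto
    finally have "survivor g (2*z) * I z \<le> survivor g z * survivor g z" .
    then have "I z / survivor g z \<le> survivor g z / survivor g (2*z)"
      using h by (simp add: divide_simps mult.commute)
    then show "survivor g z / survivor g (2 * z) \<ge> 1 / (2 * survivor g z) - 1" using key[OF z] h by simp
  qed
qed

end
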